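(* Let $p(\cdot)\in\mathcal{P}^{\log}_{0}(\mathbb{R}^{3})$ with $2\leq p^{-}\leq p(\cdot)\leq p^{+}\leq 6$, and $1\leq\rho\leq\infty$. Then there exists a positive constant $C$ such that for any $f\in\mathcal{L}^{1}(0,\infty;F\dot{B}^{1-\frac{3}{p(\cdot)}}_{p(\cdot),1}(\mathbb{R}^{3}))\cap\mathcal{L}^{1}(0,\infty;F\dot{B}^{-\frac{1}{2}}_{2,1}(\mathbb{R}^{3}))$, \[ \Big\|\int_{0}^{t}e^{(t-\tau)\Delta}f\,d\tau\Big\|_{\mathcal{Y}_{t}}\leq C\Big(\|f\|_{\mathcal{L}^{1}_{t}(F\dot{B}^{1-\frac{3}{p(\cdot)}}_{p(\cdot),1})}+\|f\|_{\mathcal{L}^{1}_{t}(F\dot{B}^{-\frac{1}{2}}_{2,1})}\Big). \]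
   Context: $e^{t\Delta}$ is the Fourier multiplier $e^{-t|\xi|^2}$. Fourier transform: $\widehat f(\xi)=(2\pi)^{-3/2}\int f(x)e^{-ix\cdot\xi}dx$. Let $\chi$ be a smooth radial non-increasing function supported in $B(0,\frac43)$ with $\chi\equiv1$ on $B(0,\frac34)$; $\varphi(\xi)=\chi(\xi/2)-\chi(\xi)$, $\varphi_j(\xi)=\varphi(2^{-j}\xi)$, $S_jf=\mathcal{F}^{-1}(\chi(2^{-j}\cdot)\widehat f)$; $\mathcal{S}'_h$ is the set of tempered distributions with $S_jf\to0$ as $j\to-\infty$. Constant exponents: $\|f\|_{F\dot B^s_{p,1}}=\sum_j2^{js}\|\varphi_j\widehat f\|_{L^p}$ and $\|f\|_{\mathcal{L}^\lambda_t(F\dot B^s_{p,1})}=\sum_j2^{js}\|\varphi_j\widehat f\|_{L^\lambda(0,\infty;L^p_\xi)}$. Variable exponents: $\mathcal{P}_0$ is the set of measurable $p:\mathbb{R}^3\to[1,\infty)$ with $1<p^-:=\operatorname{ess\,inf}p$, $p^+:=\operatorname{ess\,sup}p<\infty$; $\|f\|_{L^{p(\cdot)}}=\inf\{\lambda>0:\int|f/\lambda|^{p(x)}dx\le1\}$; $\mathcal{P}_0^{\log}$ is the set of $p\in\mathcal{P}_0$ such that $1/p_\infty=\lim_{|x|\to\infty}1/p(x)$ exists and for some $C$, $|1/p(x)-1/p(y)|\le C/\log(e+1/|x-y|)$ and $|1/p(x)-1/p_\infty|\le C/\log(e+|x|)$. For a function $s(\cdot)$: $\|f\|_{F\dot B^{s(\cdot)}_{p(\cdot),1}}=\sum_j\|2^{js(\cdot)}\varphi_j\widehat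 f\|_{L^{p(\cdot)}}$ and $\|f\|_{\mathcal{L}^\rho_t(F\dot B^{s(\cdot)}_{p(\cdot),1})}=\sum_j\|2^{js(\cdot)}\varphi_j\widehat f\|_{L^\rho(0,\infty;L^{p(\cdot)}_\xi)}$, with $2^{js(\cdot)}$ the function $\xi\mapsto 2^{js(\xi)}$. The space $\mathcal{Y}_t=\mathcal{L}^{\rho}(0,\infty;F\dot{B}^{1-\frac{3}{p(\cdot)}+\frac{2}{\rho}}_{p(\cdot),1})\cap\mathcal{L}^{1}(0,\infty;F\dot{B}^{\frac{3}{2}}_{2,1})\cap\mathcal{L}^{\infty}(0,\infty;F\dot{B}^{-\frac{1}{2}}_{2,1})$ with norm $\|u\|_{\mathcal{Y}_t}=\max\{\|u\|_{\mathcal{L}^\rho_t(F\dot B^{1-\frac{3}{p(\cdot)}+\frac2\rho}_{p(\cdot),1})},\|u\|_{\mathcal{L}^1_t(F\dot B^{\frac32}_{2,1})},\|u\|_{\mathcal{L}^\infty_t(F\dot B^{-\frac12}_{2,1})}\}$. *)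

theory Defs
  imports "HOL-Analysis.Analysis"
begin

type_synonym R3 = "real^3"

primrec Ck :: "nat \<Rightarrow> (R3 \<Rightarrow> real) set" where
  "Ck 0 = {f. continuous_on UNIV f}"
| "Ck (Suc k) = {f. continuous_on UNIV f \<and>
      (\<forall>i::3. \<exists>g \<in> Ck k. \<forall>x.
         ((\<lambda>h. f (x + h *\<^sub>R axis i 1)) has_real_derivative g x) (at 0))}"

definition smooth_fun :: "(R3 \<Rightarrow> real) \<Rightarrow> bool" where
  "smooth_fun f \<longleftrightarrow> (\<forall>k. f \<in> Ck k)"

definition admissible_chi :: "(R3 \<Rightarrow> real) \<Rightarrow> bool" where
  "admissible_chi chi \<longleftrightarrow>
     smooth_fun chi
   \<and> (\<forall>x y. norm x = norm y \<longrightarrow> chi x = chi y)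
   \<and> (\<forall>x y. norm x \<le> norm y \<longrightarrow> chi y \<le> chi x)
   \<and> closure {x. chi x \<noteq> 0} \<subseteq> ball 0 (4/3)
   \<and> (\<forall>x \<in> ball 0 (3/4). chi x = 1)"

definition phi :: "(R3 \<Rightarrow> real) \<Rightarrow> R3 \<Rightarrow> real" where
  "phi chi \<xi> = chi ((1/2) *\<^sub>R \<xi>) - chi \<xi>"

definition phij :: "(R3 \<Rightarrow> real) \<Rightarrow> int \<Rightarrow> R3 \<Rightarrow> real" where
  "phij chi j \<xi> = phi chi ((2 powr (- real_of_int j)) *\<^sub>R \<xi>)"

text \<open>p in P_0^log(R^3); p^- > 1 and p^+ < infinity are written out as essential bounds.\<close>
definition P0_log :: "(R3 \<Rightarrow> real) \<Rightarrow> bool" where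
  "P0_log p \<longleftrightarrow>
     p \<in> borel_measurable lborel
   \<and> (\<forall>x. 1 \<le> p x)
   \<and> (\<exists>c>1. AE x in lborel. c \<le> p x)
   \<and> (\<exists>c. AE x in lborel. p x \<le> c)
   \<and> (\<exists>q. ((\<lambda>x. 1 / p x) \<longlongrightarrow> q) at_infinity \<and>
        (\<exists>C. (\<forall>x y. \<bar>1 / p x - 1 / p y\<bar> \<le> C / ln (exp 1 + 1 / norm (x - y)))
           \<and> (\<forall>x. \<bar>1 / p x - q\<bar> \<le> C / ln (exp 1 + norm x))))"

definition enn_rpow :: "ennreal \<Rightarrow> real \<Rightarrow> ennreal" where
  "enn_rpow a r = (if a = top then top else ennreal (enn2real a powr r))"

definition lux_norm :: "(R3 \<Rightarrow> real) \<Rightarrow> (R3 \<Rightarrow> complex) \<Rightarrow> ennreal" where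
  "lux_norm p g = Inf {ennreal lam | lam. lam > 0 \<and>
       (\<integral>\<^sup>+ x. ennreal ((cmod (g x) / lam) powr p x) \<partial>lborel) \<le> 1}"

definition Lq_norm :: "real \<Rightarrow> (R3 \<Rightarrow> complex) \<Rightarrow> ennreal" where
  "Lq_norm q g = enn_rpow (\<integral>\<^sup>+ x. ennreal (cmod (g x) powr q) \<partial>lborel) (1 / q)"

definition time_norm :: "ennreal \<Rightarrow> (real \<Rightarrow> ennreal) \<Rightarrow> ennreal" where
  "time_norm \<rho> N = (if \<rho> = top then Inf {c. AE t in lborel. t > 0 \<longrightarrow> N t \<le> c}
      else enn_rpow (\<integral>\<^sup>+ t \<in> {0<..}. enn_rpow (N t) (enn2real \<rho>) \<partial>lborel) (1 / enn2real \<rho>))"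

text \<open>Functions are represented by their Fourier transforms F t xi = (f(t))^(xi).
  Chemin-Lerner norm L^rho_t(F B^{s(.)}_{p(.),1}) (variable exponents).\<close>
definition CL_var :: "(R3 \<Rightarrow> real) \<Rightarrow> ennreal \<Rightarrow> (R3 \<Rightarrow> real) \<Rightarrow> (R3 \<Rightarrow> real)
    \<Rightarrow> (real \<Rightarrow> R3 \<Rightarrow> complex) \<Rightarrow> ennreal" where
  "CL_var chi \<rho> p s F = (\<integral>\<^sup>+ j. time_norm \<rho> (\<lambda>t. lux_norm p
      (\<lambda>\<xi>. complex_of_real (2 powr (real_of_int j * s \<xi>) * phij chi j \<xi>) * F t \<xi>))
      \<partial>count_space (UNIV :: int set))"

definition CL_const :: "(R3 \<Rightarrow> real) \<Rightarrow> ennreal \<Rightarrow> real \<Rightarrow> real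
    \<Rightarrow> (real \<Rightarrow> R3 \<Rightarrow> complex) \<Rightarrow> ennreal" where
  "CL_const chi \<rho> q s F = (\<integral>\<^sup>+ j. ennreal (2 powr (real_of_int j * s)) *
      time_norm \<rho> (\<lambda>t. Lq_norm q (\<lambda>\<xi>. complex_of_real (phij chi j \<xi>) * F t \<xi>))
      \<partial>count_space (UNIV :: int set))"

definition duhamel :: "(real \<Rightarrow> R3 \<Rightarrow> complex) \<Rightarrow> real \<Rightarrow> R3 \<Rightarrow> complex" where
  "duhamel F t \<xi> = (LINT \<tau>:{0..t}|lborel.
      complex_of_real (exp (- (t - \<tau>) * (norm \<xi>)\<^sup>2)) * F \<tau> \<xi>)"

definition two_over :: "ennreal \<Rightarrow> real" where
  "two_over \<rho> = (if \<rho> = top then 0 else 2 / enn2real \<rho>)"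

definition Y_norm :: "(R3 \<Rightarrow> real) \<Rightarrow> (R3 \<Rightarrow> real) \<Rightarrow> ennreal
    \<Rightarrow> (real \<Rightarrow> R3 \<Rightarrow> complex) \<Rightarrow> ennreal" where
  "Y_norm chi p \<rho> U = max (CL_var chi \<rho> p (\<lambda>\<xi>. 1 - 3 / p \<xi> + two_over \<rho>) U)
      (max (CL_const chi 1 2 (3/2) U) (CL_const chi top 2 (-1/2) U))"

end

theory Submission
  imports Defs "HOL-Real_Asymp.Real_Asymp"
begin


lemma enn_rpow_ennreal: "0 \<le> x \<Longrightarrow> enn_rpow (ennreal x) r = ennreal (x powr r)"
  by (simp add: enn_rpow_def)

lemma enn_rpow_top[simp]: "enn_rpow top r = top"
  by (simp add: enn_rpow_def)

lemma enn_rpow_0[simp]: "enn_rpow 0 r = 0"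
  by (simp add: enn_rpow_def)

lemma enn_rpow_1[simp]: "enn_rpow a 1 = a"
  by (cases a rule: ennreal_cases) (auto simp: enn_rpow_def)

lemma enn_rpow_mono:
  assumes "0 \<le> r" "a \<le> b" shows "enn_rpow a r \<le> enn_rpow b r"
proof (cases b rule: ennreal_cases)
  case (real y)
  then obtain x where x: "a = ennreal x" "0 \<le> x" "x \<le> y"
    using assms by (cases a rule: ennreal_cases) (auto simp: top_unique)
  then show ?thesis using real assms by (simp add: enn_rpow_def powr_mono2)
qed (simp add: top_unique)

lemma enn_rpow_pos: "0 < r \<Longrightarrow> b \<noteq> 0 \<Longrightarrow> enn_rpow b r \<noteq> 0"
  by (cases b rule: ennreal_cases) (auto simp: enn_rpow_def)

lemma enn_rpow_mult:
  assumes "0 < r" shows "enn_rpow (a * b) r = enn_rpow a r * enn_rpow b r"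
proof (cases "a = 0 \<or> b = 0")
  case True
  then show ?thesis by auto
next
  case False
  then have a0: "a \<noteq> 0" and b0: "b \<noteq> 0" by auto
  show ?thesis
  proof (cases "a = top \<or> b = top")
    case True
    then have "a * b = top" using a0 b0 by (auto simp: ennreal_mult_eq_top_iff)
    moreover have "enn_rpow a r * enn_rpow b r = top"
      using True enn_rpow_pos[OF assms a0] enn_rpow_pos[OF assms b0]
      by (auto simp: ennreal_mult_eq_top_iff)
    ultimately show ?thesis by simp
  next
    case False
    then obtain x y where "a = ennreal x" "b = ennreal y" "0 \<le> x" "0 \<le> y"
      by (metis ennreal_cases)
    then show ?thesis
      by (simp add: enn_rpow_def powr_mult flip: ennreal_mult)
  qed
qed

lemma enn_rpow_rpow:
  assumes "0 < r" shows "enn_rpow (enn_rpow a r) (1/r) = a"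
  using assms by (cases a rule: ennreal_cases) (auto simp: enn_rpow_def powr_powr)

lemma measurable_enn_rpow[measurable]:
  assumes [measurable]: "f \<in> borel_measurable M" "g \<in> borel_measurable M"
  shows "(\<lambda>x. enn_rpow (f x) (g x)) \<in> borel_measurable M"
  unfolding enn_rpow_def by measurable

lemma young_aux:
  fixes P y x :: real
  assumes P: "1 \<le> P" and y: "0 \<le> y" and x: "0 \<le> x"
  shows "P * y powr (P - 1) * x \<le> x powr P + (P - 1) * y powr P"
proof (cases "y = 0 \<or> P = 1")
  case True
  then show ?thesis using x P by auto
next
  case False
  then have y0: "0 < y" and P1: "1 < P" using y P by auto
  define q where "q = P / (P - 1)"
  have q1: "1 < q" using P1 by (simp add: q_def)
  have pq: "1/P + 1/q = 1" using P1 by (simp add: q_def field_simps)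
  have "x * y powr (P - 1) \<le> x powr P / P + (y powr (P - 1)) powr q / q"
    using Youngs_inequality[OF P1 q1 pq x] y0 by simp
  also have "(y powr (P - 1)) powr q = y powr P"
    using P1 y0 by (simp add: powr_powr q_def)
  finally have "x * y powr (P - 1) \<le> x powr P / P + y powr P / q" .
  then have "P * (x * y powr (P - 1)) \<le> P * (x powr P / P + y powr P / q)"
    using P1 by simp
  also have "\<dots> = x powr P + (P - 1) * y powr P"
    using P1 by (simp add: q_def field_simps)
  finally show ?thesis by (simp add: mult_ac)
qed

lemma young_enn:
  fixes P y :: real
  assumes P: "1 \<le> P" and y: "0 \<le> y"
  shows "ennreal (P * y powr (P - 1)) * u \<le> enn_rpow u P + ennreal ((P - 1) * y powr P)"
proof (cases u rule: ennreal_cases)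
  case (real x)
  have "P * y powr (P - 1) * x \<le> x powr P + (P - 1) * y powr P"
    using young_aux[OF P y real(1)] .
  then show ?thesis using real P y
    by (simp add: enn_rpow_def ennreal_plus[symmetric] ennreal_mult[symmetric] del: ennreal_plus)
qed simp

lemma le_one_plus_rpow:
  assumes P: "1 \<le> P" shows "u \<le> 1 + enn_rpow u P"
proof (cases u rule: ennreal_cases)
  case (real x)
  have "x \<le> 1 + x powr P"
  proof (cases "x \<le> 1")
    case False
    then have "x powr 1 \<le> x powr P" using P by (intro powr_mono) auto
    then show ?thesis using False by simp
  qed (use real in \<open>auto intro: add_increasing2\<close>)
  then have "ennreal x \<le> ennreal (1 + x powr P)" by (rule ennreal_leI)
  also have "\<dots> = 1 + ennreal (x powr P)" by (simp add: ennreal_plus)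
  finally show ?thesis using real by (simp add: enn_rpow_def)
qed simp

lemma jensen_enn:
  fixes P :: real
  assumes P: "1 \<le> P" and [measurable]: "w \<in> borel_measurable M" "h \<in> borel_measurable M"
    and w1: "(\<integral>\<^sup>+x. w x \<partial>M) \<le> 1"
  shows "enn_rpow (\<integral>\<^sup>+x. w x * h x \<partial>M) P \<le> (\<integral>\<^sup>+x. w x * enn_rpow (h x) P \<partial>M)"
proof (cases "(\<integral>\<^sup>+x. w x * h x \<partial>M)" rule: ennreal_cases)
  case top
  have "(\<integral>\<^sup>+x. w x * h x \<partial>M) \<le> (\<integral>\<^sup>+x. w x * (1 + enn_rpow (h x) P) \<partial>M)"
    by (intro nn_integral_mono mult_left_mono le_one_plus_rpow P) auto
  also have "\<dots> = (\<integral>\<^sup>+x. w x \<partial>M) + (\<integral>\<^sup>+x. w x * enn_rpow (h x) P \<partial>M)"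
    by (simp add: distrib_left nn_integral_add)
  also have "\<dots> \<le> 1 + (\<integral>\<^sup>+x. w x * enn_rpow (h x) P \<partial>M)"
    using w1 by (intro add_right_mono)
  finally have "(\<integral>\<^sup>+x. w x * enn_rpow (h x) P \<partial>M) = top"
    using top by (auto simp: top_unique)
  then show ?thesis by simp
next
  case (real y)
  define c1 where "c1 = ennreal (P * y powr (P - 1))"
  define c2 where "c2 = ennreal ((P - 1) * y powr P)"
  define R where "R = (\<integral>\<^sup>+x. w x * enn_rpow (h x) P \<partial>M)"
  have cm: "(\<integral>\<^sup>+x. c2 * w x \<partial>M) = c2 * (\<integral>\<^sup>+x. w x \<partial>M)"
    by (rule nn_integral_cmult) measurable
  have "(\<integral>\<^sup>+x. c1 * (w x * h x) \<partial>M) = c1 * (\<integral>\<^sup>+x. w x * h x \<partial>M)"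
    by (rule nn_integral_cmult) measurable
  then have "c1 * ennreal y = (\<integral>\<^sup>+x. c1 * (w x * h x) \<partial>M)"
    using real(2) by simp
  also have "\<dots> \<le> (\<integral>\<^sup>+x. w x * (enn_rpow (h x) P + c2) \<partial>M)"
  proof (intro nn_integral_mono)
    fix x
    have "c1 * (w x * h x) = w x * (c1 * h x)" by (simp add: mult_ac)
    also have "\<dots> \<le> w x * (enn_rpow (h x) P + c2)"
      unfolding c1_def c2_def by (intro mult_left_mono young_enn P real(1)) simp
    finally show "c1 * (w x * h x) \<le> w x * (enn_rpow (h x) P + c2)" .
  qed
  also have "\<dots> = (\<integral>\<^sup>+x. w x * enn_rpow (h x) P + c2 * w x \<partial>M)"
    by (intro nn_integral_cong) (simp add: distrib_left mult.commute)
  also have "\<dots> = R + c2 * (\<integral>\<^sup>+x. w x \<partial>M)"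
    unfolding R_def cm[symmetric] by (rule nn_integral_add) measurable
  also have "\<dots> \<le> R + c2"
  proof -
    have "c2 * (\<integral>\<^sup>+x. w x \<partial>M) \<le> c2 * 1" by (intro mult_left_mono w1) simp
    then show ?thesis by (intro add_left_mono) simp
  qed
  finally have main: "c1 * ennreal y \<le> R + c2" .
  show ?thesis
  proof (cases R rule: ennreal_cases)
    case (real r)
    have yy: "y powr (P - 1) * y = y powr P"
    proof (cases "y = 0")
      case False
      then have "y powr P = y powr ((P - 1) + 1)" by simp
      also have "\<dots> = y powr (P - 1) * y powr 1" by (rule powr_add)
      finally show ?thesis using False \<open>0 \<le> y\<close> by simp
    qed simp
    have e: "c1 * ennreal y = ennreal (P * y powr P)"
      using \<open>0 \<le> y\<close> P unfolding c1_def
      by (simp add: ennreal_mult'[symmetric] yy mult.assoc)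
    have nn: "0 \<le> (P - 1) * y powr P" using P by simp
    have "ennreal (P * y powr P) \<le> ennreal (r + (P - 1) * y powr P)"
      using main unfolding e c2_def real(2) ennreal_plus[OF real(1) nn] .
    then have "P * y powr P \<le> r + (P - 1) * y powr P"
      using real(1) nn by (subst (asm) ennreal_le_iff) auto
    then have "y powr P \<le> r" by (simp add: algebra_simps)
    then show ?thesis using real \<open>0 \<le> y\<close> unfolding R_def[symmetric] \<open>_ = ennreal y\<close>
      by (simp add: enn_rpow_ennreal)
  next
    case top
    then show ?thesis unfolding R_def[symmetric] by simp
  qed
qed



definition LXe :: "'a measure \<Rightarrow> ('a \<Rightarrow> real) \<Rightarrow> ('a \<Rightarrow> ennreal) \<Rightarrow> ennreal" where
  "LXe M P f = Inf {ennreal lam | lam. lam > 0 \<and>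
      (\<integral>\<^sup>+x. enn_rpow (f x / ennreal lam) (P x) \<partial>M) \<le> 1}"

lemma div_mono_enn:
  assumes "0 < a" "a \<le> b" shows "(u::ennreal) / ennreal b \<le> u / ennreal a"
proof (cases u rule: ennreal_cases)
  case (real z)
  then show ?thesis using assms
    by (simp add: divide_ennreal divide_left_mono ennreal_leI)
next
  case top
  then show ?thesis using assms by (simp add: ennreal_top_divide)
qed

lemma modular_mono:
  fixes a b :: real and P :: "'a \<Rightarrow> real" and f :: "'a \<Rightarrow> ennreal" and M :: "'a measure"
  assumes "0 < a" "a \<le> b" "\<forall>x. 0 \<le> P x"
  shows "(\<integral>\<^sup>+x. enn_rpow (f x / ennreal b) (P x) \<partial>M) \<le> (\<integral>\<^sup>+x. enn_rpow (f x / ennreal a) (P x) \<partial>M)"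
  using assms by (intro nn_integral_mono enn_rpow_mono div_mono_enn) auto

lemma LXe_upper:
  assumes "0 < lam" "(\<integral>\<^sup>+x. enn_rpow (f x / ennreal lam) (P x) \<partial>M) \<le> 1"
  shows "LXe M P f \<le> ennreal lam"
  unfolding LXe_def using assms by (intro Inf_lower) auto

lemma LXe_below:
  assumes "LXe M P f < ennreal lam" "0 < lam" "\<forall>x. 0 \<le> P x"
  shows "(\<integral>\<^sup>+x. enn_rpow (f x / ennreal lam) (P x) \<partial>M) \<le> 1"
proof -
  obtain s where s: "s \<in> {ennreal lam | lam. lam > 0 \<and>
      (\<integral>\<^sup>+x. enn_rpow (f x / ennreal lam) (P x) \<partial>M) \<le> 1}" "s < ennreal lam"
    using assms(1) unfolding LXe_def Inf_less_iff by blast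
  then obtain l where l: "s = ennreal l" "0 < l" "(\<integral>\<^sup>+x. enn_rpow (f x / ennreal l) (P x) \<partial>M) \<le> 1"
    by blast
  have "ennreal l < ennreal lam" using s(2) l(1) by simp
  then have "l < lam" using l(2) ennreal_less_iff[of l lam] by simp
  then have "l \<le> lam" by simp
  have "(\<integral>\<^sup>+x. enn_rpow (f x / ennreal lam) (P x) \<partial>M) \<le> (\<integral>\<^sup>+x. enn_rpow (f x / ennreal l) (P x) \<partial>M)"
    by (rule modular_mono) (use l \<open>l \<le> lam\<close> assms in auto)
  then show ?thesis using l(3) by simp
qed

lemma LXe_mono:
  assumes "\<And>x. f x \<le> g x" "\<forall>x. 0 \<le> P x"
  shows "LXe M P f \<le> LXe M P g"
  unfolding LXe_def
proof (rule Inf_superset_mono, safe)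
  fix lam :: real
  assume "0 < lam" "(\<integral>\<^sup>+x. enn_rpow (g x / ennreal lam) (P x) \<partial>M) \<le> 1"
  moreover have "(\<integral>\<^sup>+x. enn_rpow (f x / ennreal lam) (P x) \<partial>M) \<le> (\<integral>\<^sup>+x. enn_rpow (g x / ennreal lam) (P x) \<partial>M)"
    using assms by (intro nn_integral_mono enn_rpow_mono divide_right_mono_ennreal) auto
  ultimately show "\<exists>l. ennreal lam = ennreal l \<and> 0 < l \<and> (\<integral>\<^sup>+x. enn_rpow (f x / ennreal l) (P x) \<partial>M) \<le> 1"
    by auto
qed

lemma cmult_div_enn:
  assumes "0 < c" "0 < lam"
  shows "ennreal c * u / ennreal (c * lam) = u / ennreal lam"
proof (cases u rule: ennreal_cases)
  case (real z)
  then show ?thesis using assms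
    by (simp add: divide_ennreal ennreal_mult'[symmetric])
next
  case top
  then show ?thesis using assms
    by (simp add: ennreal_top_divide ennreal_mult_top)
qed

lemma LXe_zero: "LXe M P (\<lambda>x. 0) = 0"
proof -
  have "LXe M P (\<lambda>x. 0) \<le> 0 + ennreal e" if "0 < e" for e
  proof -
    have "LXe M P (\<lambda>x. 0) \<le> ennreal e" by (rule LXe_upper) (simp_all add: that)
    then show ?thesis by simp
  qed
  then have "LXe M P (\<lambda>x. 0) \<le> 0" by (rule ennreal_le_epsilon)
  then show ?thesis by simp
qed

lemma LXe_cmult:
  assumes c: "0 \<le> c" and P: "\<forall>x. 0 \<le> P x"
  shows "LXe M P (\<lambda>x. ennreal c * f x) \<le> ennreal c * LXe M P f"
proof (cases "c = 0")
  case True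
  then show ?thesis using LXe_zero[of M P] by simp
next
  case False
  then have c0: "0 < c" using c by simp
  show ?thesis
  proof (cases "LXe M P f" rule: ennreal_cases)
    case top
    have "ennreal c \<noteq> 0" using c0 by simp
    then have "ennreal c * top = top" by (rule ennreal_top_mult_left)
    then show ?thesis using top by simp
  next
    case (real l)
    show ?thesis
    proof (rule ennreal_le_epsilon)
      fix e :: real assume e: "0 < e"
      define lam where "lam = l + e / c"
      have "0 < e / c" using e c0 by simp
      then have lam0: "0 < lam" "l < lam" using real(1) by (auto simp: lam_def)
      have "LXe M P f < ennreal lam" using real lam0 by (simp add: ennreal_lessI)
      then have m: "(\<integral>\<^sup>+x. enn_rpow (f x / ennreal lam) (P x) \<partial>M) \<le> 1"
        using LXe_below lam0 P by blast
      have eq: "ennreal c * f x / ennreal (c * lam) = f x / ennreal lam" for x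
        using c0 lam0(1) by (rule cmult_div_enn)
      have "LXe M P (\<lambda>x. ennreal c * f x) \<le> ennreal (c * lam)"
      proof (rule LXe_upper)
        show "0 < c * lam" using c0 lam0 by simp
        show "(\<integral>\<^sup>+x. enn_rpow (ennreal c * f x / ennreal (c * lam)) (P x) \<partial>M) \<le> 1"
          unfolding eq by (rule m)
      qed
      also have "c * lam = c * l + e" using c0 by (simp add: lam_def field_simps)
      also have "ennreal (c * l + e) = ennreal c * ennreal l + ennreal e"
        using real(1) c e by (simp add: ennreal_plus ennreal_mult)
      finally show "LXe M P (\<lambda>x. ennreal c * f x) \<le> ennreal c * LXe M P f + ennreal e"
        unfolding real(2) .
    qed
  qed
qed

lemma LXe_rat:
  assumes P: "\<forall>x. 0 \<le> P x"
  shows "LXe M P f = (INF q\<in>{q::rat. 0 < q}. if (\<integral>\<^sup>+x. enn_rpow (f x / ennreal (real_of_rat q)) (P x) \<partial>M) \<le> 1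
      then ennreal (real_of_rat q) else top)"
  (is "_ = (INF q\<in>_. ?T q)")
proof (rule antisym)
  show "LXe M P f \<le> (INF q\<in>{q::rat. 0 < q}. ?T q)"
  proof (rule INF_greatest)
    fix q :: rat assume "q \<in> {q. 0 < q}"
    then show "LXe M P f \<le> ?T q" by (auto intro: LXe_upper)
  qed
next
  show "(INF q\<in>{q::rat. 0 < q}. ?T q) \<le> LXe M P f"
    unfolding LXe_def
  proof (rule Inf_greatest, safe)
    fix lam :: real
    assume lam: "0 < lam" "(\<integral>\<^sup>+x. enn_rpow (f x / ennreal lam) (P x) \<partial>M) \<le> 1"
    show "(INF q\<in>{q::rat. 0 < q}. ?T q) \<le> ennreal lam"
    proof (rule ennreal_le_epsilon)
      fix e :: real assume e: "0 < e"
      obtain r where r: "r \<in> \<rat>" "lam < r" "r < lam + e"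
        using Rats_dense_in_real[of lam "lam + e"] e by auto
      then obtain q where q: "r = real_of_rat q" by (auto elim: Rats_cases)
      have "0 < real_of_rat q" using r q lam by linarith
      then have q0: "0 < q" by simp
      have "(\<integral>\<^sup>+x. enn_rpow (f x / ennreal r) (P x) \<partial>M) \<le> 1"
        using modular_mono[where a=lam and b=r and P=P and f=f and M=M] lam r P by (meson less_imp_le order_trans)
      then have Tq: "?T q = ennreal r" using q by simp
      have "(INF q\<in>{q::rat. 0 < q}. ?T q) \<le> ?T q" by (rule INF_lower) (simp add: q0)
      then have "(INF q\<in>{q::rat. 0 < q}. ?T q) \<le> ennreal r" by (simp only: Tq)
      also have "\<dots> \<le> ennreal lam + ennreal e"
        using r lam e by (simp add: ennreal_plus[symmetric] ennreal_leI del: ennreal_plus)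
      finally show "(INF q\<in>{q::rat. 0 < q}. ?T q) \<le> ennreal lam + ennreal e" .
    qed
  qed
qed

lemma LXe_measurable:
  assumes N: "sigma_finite_measure N" and P[measurable]: "P \<in> borel_measurable N"
    and P0: "\<forall>x. 0 \<le> P x"
    and H[measurable]: "(\<lambda>(t, x). H t x) \<in> borel_measurable (M \<Otimes>\<^sub>M N)"
  shows "(\<lambda>t. LXe N P (H t)) \<in> borel_measurable M"
proof -
  interpret N: sigma_finite_measure N by fact
  have "(\<lambda>t. INF q\<in>{q::rat. 0 < q}. if (\<integral>\<^sup>+x. enn_rpow (H t x / ennreal (real_of_rat q)) (P x) \<partial>N) \<le> 1
      then ennreal (real_of_rat q) else top) \<in> borel_measurable M"
  proof (rule borel_measurable_INF)
    show "countable {q::rat. 0 < q}" by (rule countable_subset[of _ UNIV]) auto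
  qed measurable
  then show ?thesis by (subst LXe_rat[OF P0]) 
qed



lemma mult_div_aux:
  assumes "0 < b" "0 < L"
  shows "ennreal (b / L) * (u / ennreal b) = u / ennreal L"
proof (cases u rule: ennreal_cases)
  case (real z)
  then show ?thesis using assms
    by (simp add: divide_ennreal ennreal_mult'[symmetric])
next
  case top
  have "ennreal (b / L) \<noteq> 0" using assms by simp
  then show ?thesis using top assms by (simp add: ennreal_top_divide)
qed

lemma LX_minkowski:
  fixes H :: "'a \<Rightarrow> 'b \<Rightarrow> ennreal"
  assumes sfM: "sigma_finite_measure M" and sfN: "sigma_finite_measure N"
    and P[measurable]: "P \<in> borel_measurable N" and P1: "\<forall>x. 1 \<le> P x"
    and H[measurable]: "(\<lambda>(t, x). H t x) \<in> borel_measurable (M \<Otimes>\<^sub>M N)"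
  shows "LXe N P (\<lambda>x. \<integral>\<^sup>+t. H t x \<partial>M) \<le> (\<integral>\<^sup>+t. LXe N P (H t) \<partial>M)"
proof -
  interpret M: sigma_finite_measure M by fact
  interpret N: sigma_finite_measure N by fact
  interpret MN: pair_sigma_finite M N ..
  have P0: "\<forall>x. 0 \<le> P x" using P1 by (meson order_trans zero_le_one)
  have Lm[measurable]: "(\<lambda>t. LXe N P (H t)) \<in> borel_measurable M"
    by (rule LXe_measurable[OF sfN P P0 H])
  define R where "R = (\<integral>\<^sup>+t. LXe N P (H t) \<partial>M)"
  show ?thesis unfolding R_def[symmetric]
  proof (rule ennreal_le_epsilon)
    fix e :: real assume Rfin: "R < top" and e: "0 < e"
    have AEfin: "AE t in M. LXe N P (H t) \<noteq> top"
      using nn_integral_PInf_AE[OF Lm] Rfin R_def by auto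
    define H' where "H' t x = (if LXe N P (H t) = top then 0 else H t x)" for t x
    have H'm[measurable]: "(\<lambda>(t, x). H' t x) \<in> borel_measurable (M \<Otimes>\<^sub>M N)"
      unfolding H'_def by measurable
    have int_eq: "(\<integral>\<^sup>+t. H t x \<partial>M) = (\<integral>\<^sup>+t. H' t x \<partial>M)" for x
      by (rule nn_integral_cong_AE) (use AEfin in \<open>auto simp: H'_def\<close>)
    obtain g where g[measurable]: "g \<in> borel_measurable M" and gint: "integral\<^sup>N M g \<noteq> \<infinity>"
      and gpos: "\<forall>t\<in>space M. 0 < g t \<and> g t < \<infinity>"
      using M.Ex_finite_integrable_function by blast
    define G where "G = enn2real (integral\<^sup>N M g)"
    have G: "integral\<^sup>N M g = ennreal G" "0 \<le> G"
      using gint by (auto simp: G_def less_top)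
    define \<delta> where "\<delta> = e / (2 * (G + 1))"
    have d0: "0 < \<delta>" using e G by (simp add: \<delta>_def)
    have dG: "\<delta> * G \<le> e / 2"
    proof -
      have "\<delta> * G = (e / 2) * (G / (G + 1))" using G by (simp add: \<delta>_def field_simps)
      also have "\<dots> \<le> (e / 2) * 1" using G e by (intro mult_left_mono) auto
      finally show ?thesis by simp
    qed
    define b where "b t = enn2real (LXe N P (H t)) + \<delta> * enn2real (g t)" for t
    have bm[measurable]: "b \<in> borel_measurable M" unfolding b_def by measurable
    have b0: "0 \<le> b t" for t using d0 by (simp add: b_def)
    have bpos: "0 < b t" if "t \<in> space M" for t
    proof -
      have "0 < enn2real (g t)" using gpos that by (simp add: enn2real_positive_iff)
      then show ?thesis using d0 by (simp add: b_def add_nonneg_pos)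
    qed
    define B where "B = (\<integral>\<^sup>+t. ennreal (b t) \<partial>M)"
    have "B = (\<integral>\<^sup>+t. ennreal (enn2real (LXe N P (H t))) + ennreal \<delta> * g t \<partial>M)"
      unfolding B_def b_def
    proof (rule nn_integral_cong)
      fix t assume t: "t \<in> space M"
      have "ennreal (\<delta> * enn2real (g t)) = ennreal \<delta> * g t"
        using gpos t d0 by (simp add: ennreal_mult less_top)
      then show "ennreal (enn2real (LXe N P (H t)) + \<delta> * enn2real (g t)) =
          ennreal (enn2real (LXe N P (H t))) + ennreal \<delta> * g t"
        using d0 by (simp add: ennreal_plus)
    qed
    also have "\<dots> = (\<integral>\<^sup>+t. ennreal (enn2real (LXe N P (H t))) \<partial>M) + ennreal \<delta> * integral\<^sup>N M g"
      by (simp add: nn_integral_add nn_integral_cmult)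
    also have "\<dots> \<le> R + ennreal (\<delta> * G)"
    proof (rule add_mono)
      show "(\<integral>\<^sup>+t. ennreal (enn2real (LXe N P (H t))) \<partial>M) \<le> R"
        unfolding R_def by (intro nn_integral_mono) (simp add: ennreal_enn2real_if)
      show "ennreal \<delta> * integral\<^sup>N M g \<le> ennreal (\<delta> * G)"
        using G d0 by (simp add: ennreal_mult)
    qed
    finally have B_le: "B \<le> R + ennreal (\<delta> * G)" .
    have "R + ennreal (\<delta> * G) < top" using Rfin by (simp add: less_top)
    then have Bfin: "B < top" using B_le by (rule le_less_trans[rotated])
    define L where "L = enn2real B + e / 2"
    have L0: "0 < L" using e enn2real_nonneg[of B] unfolding L_def by linarith
    have LB: "ennreal L = B + ennreal (e / 2)"
      using Bfin e by (simp add: L_def ennreal_plus less_top)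
    have L_le: "ennreal L \<le> R + ennreal e"
    proof -
      have "ennreal L \<le> R + ennreal (\<delta> * G) + ennreal (e / 2)"
        unfolding LB using B_le by (rule add_right_mono)
      also have "\<dots> = R + ennreal (\<delta> * G + e / 2)"
        using d0 G e by (simp add: ennreal_plus add.assoc)
      also have "\<dots> \<le> R + ennreal e"
        using dG by (intro add_left_mono ennreal_leI) simp
      finally show ?thesis .
    qed
    define w where "w t = ennreal (b t / L)" for t
    define h where "h t x = H' t x / ennreal (b t)" for t x
    have wm[measurable]: "w \<in> borel_measurable M" unfolding w_def by measurable
    have hm[measurable]: "(\<lambda>(t, x). h t x) \<in> borel_measurable (M \<Otimes>\<^sub>M N)" unfolding h_def by measurable
    have w1: "(\<integral>\<^sup>+t. w t \<partial>M) \<le> 1"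
    proof -
      have "(\<integral>\<^sup>+t. w t \<partial>M) = (\<integral>\<^sup>+t. ennreal (b t) * ennreal (1 / L) \<partial>M)"
        unfolding w_def using b0 L0 by (intro nn_integral_cong) (simp add: ennreal_mult[symmetric])
      also have "\<dots> = B * ennreal (1 / L)" unfolding B_def by (simp add: nn_integral_multc)
      also have "\<dots> = ennreal (enn2real B / L)"
        using Bfin L0 by (cases B rule: ennreal_cases) (auto simp: ennreal_mult[symmetric] simp del: ennreal_mult)
      also have "\<dots> \<le> ennreal 1"
      proof (rule ennreal_leI)
        have "enn2real B \<le> L" using e unfolding L_def by simp
        then show "enn2real B / L \<le> 1" using L0 by (simp add: pos_divide_le_eq)
      qed
      finally show ?thesis by simp
    qed
    have inner: "(\<integral>\<^sup>+x. enn_rpow (h t x) (P x) \<partial>N) \<le> 1" if t: "t \<in> space M" for t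
    proof (cases "LXe N P (H t) = top")
      case True
      then show ?thesis by (simp add: h_def H'_def)
    next
      case False
      then have "LXe N P (H t) = ennreal (enn2real (LXe N P (H t)))" by (simp add: less_top)
      also have "\<dots> < ennreal (b t)"
      proof (rule ennreal_lessI)
        show "0 < b t" using bpos t .
        have "0 < enn2real (g t)" using gpos t by (simp add: enn2real_positive_iff)
        then show "enn2real (LXe N P (H t)) < b t" using d0 by (simp add: b_def)
      qed
      finally have "LXe N P (H t) < ennreal (b t)" .
      then have "(\<integral>\<^sup>+x. enn_rpow (H t x / ennreal (b t)) (P x) \<partial>N) \<le> 1"
        using LXe_below bpos[OF t] P0 by blast
      then show ?thesis using False by (simp add: h_def H'_def)
    qed
    have "LXe N P (\<lambda>x. \<integral>\<^sup>+t. H t x \<partial>M) \<le> ennreal L"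
    proof (rule LXe_upper[OF L0])
      have pt: "enn_rpow ((\<integral>\<^sup>+t. H t x \<partial>M) / ennreal L) (P x) \<le> (\<integral>\<^sup>+t. w t * enn_rpow (h t x) (P x) \<partial>M)" if xN: "x \<in> space N" for x
      proof -
        have "(\<integral>\<^sup>+t. H t x \<partial>M) / ennreal L = (\<integral>\<^sup>+t. H' t x / ennreal L \<partial>M)"
          unfolding int_eq by (rule nn_integral_divide[symmetric]) (measurable, rule xN)
        also have "\<dots> = (\<integral>\<^sup>+t. w t * h t x \<partial>M)"
          unfolding w_def h_def by (intro nn_integral_cong) (simp add: mult_div_aux bpos L0)
        finally have eq: "(\<integral>\<^sup>+t. H t x \<partial>M) / ennreal L = (\<integral>\<^sup>+t. w t * h t x \<partial>M)" .
        show ?thesis unfolding eq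
          by (rule jensen_enn) (use P1 w1 xN in auto)
      qed
      have "(\<integral>\<^sup>+x. enn_rpow ((\<integral>\<^sup>+t. H t x \<partial>M) / ennreal L) (P x) \<partial>N)
          \<le> (\<integral>\<^sup>+x. (\<integral>\<^sup>+t. w t * enn_rpow (h t x) (P x) \<partial>M) \<partial>N)"
        by (intro nn_integral_mono pt)
      also have "\<dots> = (\<integral>\<^sup>+t. (\<integral>\<^sup>+x. w t * enn_rpow (h t x) (P x) \<partial>N) \<partial>M)"
        by (rule MN.Fubini') measurable
      also have "\<dots> = (\<integral>\<^sup>+t. w t * (\<integral>\<^sup>+x. enn_rpow (h t x) (P x) \<partial>N) \<partial>M)"
        by (intro nn_integral_cong nn_integral_cmult) measurable
      also have "\<dots> \<le> (\<integral>\<^sup>+t. w t * 1 \<partial>M)"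
        by (intro nn_integral_mono mult_left_mono inner) auto
      also have "\<dots> \<le> 1" using w1 by simp
      finally show "(\<integral>\<^sup>+x. enn_rpow ((\<integral>\<^sup>+t. H t x \<partial>M) / ennreal L) (P x) \<partial>N) \<le> 1" .
    qed
    also note L_le
    finally show "LXe N P (\<lambda>x. \<integral>\<^sup>+t. H t x \<partial>M) \<le> R + ennreal e" .
  qed
qed



lemma exp_kernel_int:
  assumes a: "0 < a" and q: "1 \<le> q"
  shows "(\<integral>\<^sup>+t. ennreal (a * exp (-(t-\<tau>)*(a*q))) * indicator {\<tau>..} t \<partial>lborel) \<le> 1"
proof -
  define F where "F t = - exp (-(t-\<tau>)*(a*q)) / q" for t
  have "(\<integral>\<^sup>+t. ennreal (a * exp (-(t-\<tau>)*(a*q))) * indicator {\<tau>..} t \<partial>lborel) = ennreal (0 - F \<tau>)"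
  proof (rule nn_integral_FTC_atLeast)
    show "(\<lambda>t. a * exp (-(t-\<tau>)*(a*q))) \<in> borel_measurable borel" by measurable
    show "DERIV F t :> a * exp (-(t-\<tau>)*(a*q))" for t
      unfolding F_def using q by (auto intro!: derivative_eq_intros simp: field_simps)
    show "0 \<le> a * exp (-(t-\<tau>)*(a*q))" for t using a by simp
    show "(F \<longlongrightarrow> 0) at_top" unfolding F_def using a q by real_asymp
  qed
  also have "\<dots> = ennreal (1 / q)" by (simp add: F_def)
  also have "\<dots> \<le> ennreal 1" using q by (intro ennreal_leI) simp
  finally show ?thesis by simp
qed

definition Kt :: "real \<Rightarrow> real \<Rightarrow> real \<Rightarrow> ennreal" where
  "Kt a t \<tau> = (if 0 < \<tau> \<and> \<tau> \<le> t then ennreal (exp (-(t-\<tau>)*a)) else 0)"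

lemma Kt_measurable[measurable]:
  "(\<lambda>(t, \<tau>). Kt a t \<tau>) \<in> borel_measurable (lborel \<Otimes>\<^sub>M lborel)"
  unfolding Kt_def by measurable

lemma Kt_measurable2[measurable]: "(\<lambda>\<tau>. Kt a t \<tau>) \<in> borel_measurable lborel"
  unfolding Kt_def by measurable

lemma Kt_le_ind:
  assumes "0 \<le> a" shows "Kt a t \<tau> \<le> indicator {0<..} \<tau>"
  using assms by (auto simp: Kt_def intro: mult_nonpos_nonneg)

lemma Kt_int_le:
  assumes a: "0 \<le> a"
  shows "(\<integral>\<^sup>+\<tau>. Kt a t \<tau> * g \<tau> \<partial>lborel) \<le> (\<integral>\<^sup>+\<tau>\<in>{0<..}. g \<tau> \<partial>lborel)"
proof (intro nn_integral_mono)
  fix \<tau>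
  have "Kt a t \<tau> * g \<tau> \<le> indicator {0<..} \<tau> * g \<tau>"
    using Kt_le_ind[OF a] by (rule mult_right_mono) simp
  then show "Kt a t \<tau> * g \<tau> \<le> g \<tau> * indicator {0<..} \<tau>" by (simp add: mult.commute)
qed

lemma Kt_rpow_le:
  assumes a: "0 < a" and q: "1 \<le> q"
  shows "enn_rpow (ennreal (a powr (1/q)) * Kt a t \<tau>) q \<le> ennreal (a * exp (-(t-\<tau>)*(a*q))) * indicator {\<tau>..} t"
proof (cases "0 < \<tau> \<and> \<tau> \<le> t")
  case True
  have "ennreal (a powr (1/q)) * Kt a t \<tau> = ennreal (a powr (1/q) * exp (-(t-\<tau>)*a))"
    using True by (simp add: Kt_def ennreal_mult)
  moreover have "(a powr (1/q) * exp (-(t-\<tau>)*a)) powr q = a * exp (-(t-\<tau>)*(a*q))"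
    using a q by (simp add: powr_mult powr_powr exp_powr_real mult_ac)
  ultimately show ?thesis using True by (simp add: enn_rpow_ennreal)
next
  case False
  then have "Kt a t \<tau> = 0" by (simp add: Kt_def)
  then show ?thesis by simp
qed

lemma time_bound:
  fixes g N :: "real \<Rightarrow> ennreal" and \<rho> :: ennreal
  assumes g[measurable]: "g \<in> borel_measurable lborel" and a: "0 < a" and b: "0 < b" and \<rho>: "1 \<le> \<rho>"
    and N: "\<And>t. 0 < t \<Longrightarrow> N t \<le> ennreal b * ennreal (a powr (if \<rho> = top then 0 else 1 / enn2real \<rho>))
              * (\<integral>\<^sup>+\<tau>. Kt a t \<tau> * g \<tau> \<partial>lborel)"
  shows "time_norm \<rho> N \<le> ennreal b * (\<integral>\<^sup>+\<tau>\<in>{0<..}. g \<tau> \<partial>lborel)"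
proof -
  define S where "S = (\<integral>\<^sup>+\<tau>\<in>{0<..}. g \<tau> \<partial>lborel)"
  have KS: "(\<integral>\<^sup>+\<tau>. Kt a t \<tau> * g \<tau> \<partial>lborel) \<le> S" for t
    unfolding S_def using a by (intro Kt_int_le) simp
  show ?thesis
  proof (cases "\<rho> = top")
    case True
    have "time_norm \<rho> N = Inf {c. AE t in lborel. t > 0 \<longrightarrow> N t \<le> c}"
      using True by (simp add: time_norm_def)
    also have "\<dots> \<le> ennreal b * S"
    proof (rule Inf_lower, safe, intro AE_I2 impI)
      fix t :: real assume t: "0 < t"
      have "N t \<le> ennreal b * ennreal (a powr 0) * (\<integral>\<^sup>+\<tau>. Kt a t \<tau> * g \<tau> \<partial>lborel)"
        using N[OF t] True by simp
      also have "\<dots> = ennreal b * (\<integral>\<^sup>+\<tau>. Kt a t \<tau> * g \<tau> \<partial>lborel)" using a by simp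
      also have "\<dots> \<le> ennreal b * S" by (intro mult_left_mono KS) simp
      finally show "N t \<le> ennreal b * S" .
    qed
    finally show ?thesis unfolding S_def .
  next
    case False
    obtain q where q: "\<rho> = ennreal q" "0 \<le> q" using False by (cases \<rho> rule: ennreal_cases) auto
    have q1: "1 \<le> q" using \<rho> q by (metis ennreal_le_iff ennreal_1 zero_le_one)
    have eq: "enn2real \<rho> = q" using q by simp
    have tn: "time_norm \<rho> N = enn_rpow (\<integral>\<^sup>+t\<in>{0<..}. enn_rpow (N t) q \<partial>lborel) (1 / q)"
      using False by (simp add: time_norm_def eq)
    have Nt: "N t \<le> ennreal b * ennreal (a powr (1/q)) * (\<integral>\<^sup>+\<tau>. Kt a t \<tau> * g \<tau> \<partial>lborel)" if "0 < t" for t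
      using N[OF that] False by (simp add: eq)
    show ?thesis
    proof (cases S rule: ennreal_cases)
      case top
      have "ennreal b \<noteq> 0" using b by simp
      then show ?thesis using top unfolding S_def[symmetric] by simp
    next
      case (real s)
      show ?thesis
      proof (cases "s = 0")
        case True
        have "N t = 0" if "0 < t" for t
        proof -
          have "(\<integral>\<^sup>+\<tau>. Kt a t \<tau> * g \<tau> \<partial>lborel) = 0" using KS[of t] real True by simp
          then show ?thesis using Nt[OF that] by simp
        qed
        then have z: "\<And>t. enn_rpow (N t) q * indicator {0<..} t = 0"
          by (auto simp: indicator_def)
        have "(\<integral>\<^sup>+t\<in>{0<..}. enn_rpow (N t) q \<partial>lborel) = (\<integral>\<^sup>+t. 0 \<partial>(lborel :: real measure))"
          by (intro nn_integral_cong) (simp only: z)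
        then have "(\<integral>\<^sup>+t\<in>{0<..}. enn_rpow (N t) q \<partial>lborel) = 0"
          by simp
        then show ?thesis unfolding tn by simp
      next
        case False
        then have s0: "0 < s" using real by simp
        define w where "w \<tau> = g \<tau> * indicator {0<..} \<tau> / S" for \<tau>
        have wm[measurable]: "w \<in> borel_measurable lborel" unfolding w_def by measurable
        have Sne: "S \<noteq> 0" "S \<noteq> top" using real s0 by auto
        have w1: "(\<integral>\<^sup>+\<tau>. w \<tau> \<partial>lborel) \<le> 1"
        proof -
          have "(\<integral>\<^sup>+\<tau>. w \<tau> \<partial>lborel) = S / S"
            unfolding w_def S_def by (rule nn_integral_divide) measurable
          moreover have "S < top" using Sne by (simp add: less_top)
          ultimately show ?thesis using Sne by simp
        qed
        define h where "h t \<tau> = ennreal (a powr (1/q)) * Kt a t \<tau>" for t \<tau>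
        have hm[measurable]: "(\<lambda>(t, \<tau>). h t \<tau>) \<in> borel_measurable (lborel \<Otimes>\<^sub>M lborel)"
          unfolding h_def by measurable
        define C where "C = enn_rpow (ennreal b * S) q"
        have pt: "enn_rpow (N t) q \<le> C * (\<integral>\<^sup>+\<tau>. w \<tau> * enn_rpow (h t \<tau>) q \<partial>lborel)" if t: "0 < t" for t
        proof -
          have "(\<integral>\<^sup>+\<tau>. w \<tau> * h t \<tau> \<partial>lborel) = (\<integral>\<^sup>+\<tau>. ennreal (a powr (1/q)) * (Kt a t \<tau> * g \<tau>) / S \<partial>lborel)"
            unfolding w_def h_def
            by (intro nn_integral_cong) (auto simp: Kt_def ennreal_times_divide ennreal_divide_times mult_ac)
          also have "\<dots> = (\<integral>\<^sup>+\<tau>. ennreal (a powr (1/q)) * (Kt a t \<tau> * g \<tau>) \<partial>lborel) / S"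
            by (rule nn_integral_divide) measurable
          also have "\<dots> = ennreal (a powr (1/q)) * (\<integral>\<^sup>+\<tau>. Kt a t \<tau> * g \<tau> \<partial>lborel) / S"
          proof -
            have m: "(\<lambda>\<tau>. Kt a t \<tau> * g \<tau>) \<in> borel_measurable lborel" by measurable
            show ?thesis by (simp add: nn_integral_cmult[OF m])
          qed
          finally have e1: "(\<integral>\<^sup>+\<tau>. w \<tau> * h t \<tau> \<partial>lborel) = ennreal (a powr (1/q)) * (\<integral>\<^sup>+\<tau>. Kt a t \<tau> * g \<tau> \<partial>lborel) / S" .
          have "ennreal b * ennreal (a powr (1/q)) * (\<integral>\<^sup>+\<tau>. Kt a t \<tau> * g \<tau> \<partial>lborel)
              = (ennreal b * S) * (\<integral>\<^sup>+\<tau>. w \<tau> * h t \<tau> \<partial>lborel)"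
          proof -
            have SY: "S * (Y / S) = Y" for Y :: ennreal
            proof -
              have "S * (Y / S) = Y * S / S" by (simp add: ennreal_times_divide mult.commute)
              also have "\<dots> = Y" using Sne by (rule ennreal_mult_divide_eq)
              finally show ?thesis .
            qed
            show ?thesis unfolding e1 mult.assoc[of "ennreal b" S] SY by (simp add: mult.assoc)
          qed
          then have "N t \<le> (ennreal b * S) * (\<integral>\<^sup>+\<tau>. w \<tau> * h t \<tau> \<partial>lborel)" using Nt[OF t] by simp
          then have "enn_rpow (N t) q \<le> enn_rpow ((ennreal b * S) * (\<integral>\<^sup>+\<tau>. w \<tau> * h t \<tau> \<partial>lborel)) q"
            using q1 by (intro enn_rpow_mono) auto
          also have "\<dots> = C * enn_rpow (\<integral>\<^sup>+\<tau>. w \<tau> * h t \<tau> \<partial>lborel) q"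
            unfolding C_def using q1 by (intro enn_rpow_mult) simp
          also have "\<dots> \<le> C * (\<integral>\<^sup>+\<tau>. w \<tau> * enn_rpow (h t \<tau>) q \<partial>lborel)"
          proof (intro mult_left_mono jensen_enn q1 wm w1)
            show "h t \<in> borel_measurable lborel" unfolding h_def by measurable
          qed simp
          finally show ?thesis .
        qed
        have "(\<integral>\<^sup>+t\<in>{0<..}. enn_rpow (N t) q \<partial>lborel) \<le> (\<integral>\<^sup>+t. C * (\<integral>\<^sup>+\<tau>. w \<tau> * enn_rpow (h t \<tau>) q \<partial>lborel) \<partial>lborel)"
          using pt by (intro nn_integral_mono) (auto simp: indicator_def)
        also have "\<dots> = C * (\<integral>\<^sup>+t. (\<integral>\<^sup>+\<tau>. w \<tau> * enn_rpow (h t \<tau>) q \<partial>lborel) \<partial>lborel)"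
          by (rule nn_integral_cmult) measurable
        also have "\<dots> \<le> C * 1"
        proof (rule mult_left_mono)
          have "(\<integral>\<^sup>+t. (\<integral>\<^sup>+\<tau>. w \<tau> * enn_rpow (h t \<tau>) q \<partial>lborel) \<partial>lborel)
            = (\<integral>\<^sup>+\<tau>. (\<integral>\<^sup>+t. w \<tau> * enn_rpow (h t \<tau>) q \<partial>lborel) \<partial>lborel)"
            by (rule lborel_pair.Fubini'[symmetric]) measurable
          also have "\<dots> = (\<integral>\<^sup>+\<tau>. w \<tau> * (\<integral>\<^sup>+t. enn_rpow (h t \<tau>) q \<partial>lborel) \<partial>lborel)"
            by (intro nn_integral_cong nn_integral_cmult) measurable
          also have "\<dots> \<le> (\<integral>\<^sup>+\<tau>. w \<tau> * 1 \<partial>lborel)"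
          proof (intro nn_integral_mono mult_left_mono)
            fix \<tau> :: real
            have "(\<integral>\<^sup>+t. enn_rpow (h t \<tau>) q \<partial>lborel) \<le> (\<integral>\<^sup>+t. ennreal (a * exp (-(t-\<tau>)*(a*q))) * indicator {\<tau>..} t \<partial>lborel)"
              unfolding h_def by (intro nn_integral_mono Kt_rpow_le a q1)
            also have "\<dots> \<le> 1" by (rule exp_kernel_int[OF a q1])
            finally show "(\<integral>\<^sup>+t. enn_rpow (h t \<tau>) q \<partial>lborel) \<le> 1" .
          qed simp
          also have "\<dots> \<le> 1" using w1 by simp
          finally show "(\<integral>\<^sup>+t. (\<integral>\<^sup>+\<tau>. w \<tau> * enn_rpow (h t \<tau>) q \<partial>lborel) \<partial>lborel) \<le> 1" .
        qed simp
        finally have "(\<integral>\<^sup>+t\<in>{0<..}. enn_rpow (N t) q \<partial>lborel) \<le> C"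
          by simp
        then have "time_norm \<rho> N \<le> enn_rpow C (1/q)"
          unfolding tn using q1 by (intro enn_rpow_mono) auto
        also have "\<dots> = ennreal b * S" unfolding C_def using q1 by (intro enn_rpow_rpow) simp
        finally show ?thesis unfolding S_def .
      qed
    qed
  qed
qed



lemma lux_eq: "lux_norm p g = LXe lborel p (\<lambda>x. ennreal (cmod (g x)))"
proof -
  have "(\<integral>\<^sup>+x. ennreal ((cmod (g x) / lam) powr p x) \<partial>lborel) =
        (\<integral>\<^sup>+x. enn_rpow (ennreal (cmod (g x)) / ennreal lam) (p x) \<partial>lborel)" if "0 < lam" for lam
    using that by (intro nn_integral_cong) (simp add: divide_ennreal enn_rpow_ennreal)
  then have "{ennreal lam | lam. lam > 0 \<and> (\<integral>\<^sup>+x. ennreal ((cmod (g x) / lam) powr p x) \<partial>lborel) \<le> 1}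
     = {ennreal lam | lam. lam > 0 \<and> (\<integral>\<^sup>+x. enn_rpow (ennreal (cmod (g x)) / ennreal lam) (p x) \<partial>lborel) \<le> 1}"
    by (metis (no_types, lifting))
  then show ?thesis unfolding lux_norm_def LXe_def by simp
qed

lemma Lq_eq:
  assumes q: "1 \<le> q" and gm[measurable]: "g \<in> borel_measurable lborel"
  shows "Lq_norm q g = LXe lborel (\<lambda>_. q) (\<lambda>x. ennreal (cmod (g x)))"
proof -
  define I where "I = (\<integral>\<^sup>+x. ennreal (cmod (g x) powr q) \<partial>lborel)"
  have mod_eq: "(\<integral>\<^sup>+x. enn_rpow (ennreal (cmod (g x)) / ennreal lam) q \<partial>lborel) = I * ennreal (1 / lam powr q)"
    if lam: "0 < lam" for lam
  proof -
    have "(\<integral>\<^sup>+x. enn_rpow (ennreal (cmod (g x)) / ennreal lam) q \<partial>lborel)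
        = (\<integral>\<^sup>+x. ennreal (cmod (g x) powr q) * ennreal (1 / lam powr q) \<partial>lborel)"
      using lam by (intro nn_integral_cong)
        (simp add: divide_ennreal enn_rpow_ennreal powr_divide ennreal_mult[symmetric] del: ennreal_mult)
    also have "\<dots> = I * ennreal (1 / lam powr q)" unfolding I_def
      by (rule nn_integral_multc) measurable
    finally show ?thesis .
  qed
  have LX: "LXe lborel (\<lambda>_. q) (\<lambda>x. ennreal (cmod (g x))) =
      Inf {ennreal lam | lam. lam > 0 \<and> I * ennreal (1 / lam powr q) \<le> 1}"
    unfolding LXe_def using mod_eq by (metis (no_types, lifting))
  show ?thesis
  proof (cases I rule: ennreal_cases)
    case top
    have E0: "{ennreal lam | lam. lam > 0 \<and> I * ennreal (1 / lam powr q) \<le> 1} = {}"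
    proof -
      have nc: "\<not> (I * ennreal (1 / lam powr q) \<le> 1)" if "0 < lam" for lam
      proof -
        have "ennreal (1 / lam powr q) \<noteq> 0" using that by simp
        then show ?thesis using top by (simp add: ennreal_top_mult top_unique)
      qed
      show ?thesis using nc by blast
    qed
    have "Lq_norm q g = top" unfolding Lq_norm_def I_def[symmetric] using top by simp
    moreover have "LXe lborel (\<lambda>_. q) (\<lambda>x. ennreal (cmod (g x))) = top" unfolding LX E0 by simp
    ultimately show ?thesis by simp
  next
    case (real i)
    have cond: "I * ennreal (1 / lam powr q) \<le> 1 \<longleftrightarrow> i powr (1/q) \<le> lam" if lam: "0 < lam" for lam
    proof -
      have "I * ennreal (1 / lam powr q) = ennreal (i / lam powr q)"
        using real lam by (simp add: ennreal_mult[symmetric] del: ennreal_mult)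
      then have "I * ennreal (1 / lam powr q) \<le> 1 \<longleftrightarrow> i / lam powr q \<le> 1"
        by (simp add: ennreal_le_1)
      also have "\<dots> \<longleftrightarrow> i \<le> lam powr q" using lam by (simp add: divide_le_eq_1)
      also have "\<dots> \<longleftrightarrow> i powr (1/q) \<le> lam"
      proof
        assume "i \<le> lam powr q"
        then have "i powr (1/q) \<le> (lam powr q) powr (1/q)" using real q by (intro powr_mono2) auto
        then show "i powr (1/q) \<le> lam" using lam q by (simp add: powr_powr)
      next
        assume "i powr (1/q) \<le> lam"
        then have "(i powr (1/q)) powr q \<le> lam powr q" using real q by (intro powr_mono2) auto
        then show "i \<le> lam powr q" using real q
          by (cases "i = 0") (auto simp: powr_powr)
      qed
      finally show ?thesis .
    qed
    have Lq: "Lq_norm q g = ennreal (i powr (1/q))"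
      unfolding Lq_norm_def I_def[symmetric] using real by (simp add: enn_rpow_ennreal)
    have mem: "ennreal lam \<in> {ennreal lam | lam. lam > 0 \<and> I * ennreal (1 / lam powr q) \<le> 1}"
      if "0 < lam" "i powr (1/q) \<le> lam" for lam
    proof -
      have "I * ennreal (1 / lam powr q) \<le> 1" using cond[OF that(1)] that(2) by simp
      then show ?thesis using that(1) by blast
    qed
    have le: "LXe lborel (\<lambda>_. q) (\<lambda>x. ennreal (cmod (g x))) \<le> ennreal (i powr (1/q))"
    proof (cases "i = 0")
      case False
      then have "0 < i powr (1/q)" using real by simp
      then show ?thesis unfolding LX by (intro Inf_lower mem) auto
    next
      case True
      have h: "LXe lborel (\<lambda>_. q) (\<lambda>x. ennreal (cmod (g x))) \<le> 0 + ennreal e" if "0 < e" for e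
      proof -
        have "LXe lborel (\<lambda>_. q) (\<lambda>x. ennreal (cmod (g x))) \<le> ennreal e"
          unfolding LX by (intro Inf_lower mem) (use that True in auto)
        then show ?thesis by simp
      qed
      have "LXe lborel (\<lambda>_. q) (\<lambda>x. ennreal (cmod (g x))) \<le> 0"
        by (rule ennreal_le_epsilon, rule h, assumption)
      then show ?thesis using True by simp
    qed
    have ge: "ennreal (i powr (1/q)) \<le> LXe lborel (\<lambda>_. q) (\<lambda>x. ennreal (cmod (g x)))"
      unfolding LX
    proof (rule Inf_greatest, safe)
      fix lam :: real assume "0 < lam" "I * ennreal (1 / lam powr q) \<le> 1"
      then have "i powr (1/q) \<le> lam" using cond by blast
      then show "ennreal (i powr (1/q)) \<le> ennreal lam" by (rule ennreal_leI)
    qed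
    show ?thesis using le ge Lq by simp
  qed
qed

lemma chi_meas:
  assumes "admissible_chi chi" shows "chi \<in> borel_measurable lborel"
proof -
  have "smooth_fun chi" using assms unfolding admissible_chi_def by blast
  then have "chi \<in> Ck 0" unfolding smooth_fun_def by blast
  then have "continuous_on UNIV chi" by simp
  then show ?thesis by (simp add: borel_measurable_continuous_onI)
qed

lemma phij_meas[measurable]:
  assumes "admissible_chi chi" shows "phij chi j \<in> borel_measurable lborel"
proof -
  note chi_meas[OF assms, measurable]
  show ?thesis unfolding phij_def phi_def by measurable
qed

lemma phij_supp:
  assumes chi: "admissible_chi chi" and nz: "phij chi j \<xi> \<noteq> 0"
  shows "(9/16) * (2 powr real_of_int j)^2 \<le> (norm \<xi>)^2"
proof -
  define \<eta> where "\<eta> = (2 powr (- real_of_int j)) *\<^sub>R \<xi>"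
  have ball1: "\<forall>x \<in> ball 0 (3/4). chi x = 1" using chi unfolding admissible_chi_def by blast
  have "\<not> norm \<eta> < 3/4"
  proof
    assume "norm \<eta> < 3/4"
    then have "chi \<eta> = 1" "chi ((1/2) *\<^sub>R \<eta>) = 1" using ball1 by auto
    then show False using nz by (simp add: phij_def phi_def \<eta>_def)
  qed
  then have "3/4 \<le> 2 powr (- real_of_int j) * norm \<xi>" by (simp add: \<eta>_def)
  then have "3/4 * 2 powr real_of_int j \<le> 2 powr (- real_of_int j) * norm \<xi> * 2 powr real_of_int j"
    by (intro mult_right_mono) auto
  also have "\<dots> = norm \<xi>" by (simp add: powr_minus field_simps)
  finally have h: "3/4 * 2 powr real_of_int j \<le> norm \<xi>" .
  have "(3/4 * 2 powr real_of_int j)^2 \<le> (norm \<xi>)^2" by (rule power_mono[OF h]) simp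
  moreover have "(3/4 * 2 powr real_of_int j)^2 = 9/16 * (2 powr real_of_int j)^2"
    by (simp add: power2_eq_square)
  ultimately show ?thesis by linarith
qed

lemma Kt_ennreal: "Kt a t \<tau> = ennreal (if 0 < \<tau> \<and> \<tau> \<le> t then exp (-(t-\<tau>)*a) else 0)"
  by (simp add: Kt_def)

lemma PB:
  fixes F :: "real \<Rightarrow> R3 \<Rightarrow> complex" and v :: "R3 \<Rightarrow> real"
  assumes F[measurable]: "(\<lambda>(\<tau>, \<xi>). F \<tau> \<xi>) \<in> borel_measurable (lborel \<Otimes>\<^sub>M lborel)"
    and supp: "v \<xi> \<noteq> 0 \<Longrightarrow> a \<le> (norm \<xi>)^2"
  shows "ennreal (cmod (complex_of_real (v \<xi>) * duhamel F t \<xi>))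
      \<le> (\<integral>\<^sup>+\<tau>. Kt a t \<tau> * ennreal (cmod (complex_of_real (v \<xi>) * F \<tau> \<xi>)) \<partial>lborel)"
proof (cases "v \<xi> = 0")
  case True
  then show ?thesis by simp
next
  case False
  have a: "a \<le> (norm \<xi>)^2" using supp False by blast
  define f where "f \<tau> = indicator {0..t} \<tau> *\<^sub>R (complex_of_real (exp (- (t - \<tau>) * (norm \<xi>)\<^sup>2)) * F \<tau> \<xi>)" for \<tau>
  have Fm[measurable]: "(\<lambda>\<tau>. F \<tau> \<xi>) \<in> borel_measurable lborel" by measurable
  have D: "duhamel F t \<xi> = integral\<^sup>L lborel f"
    unfolding duhamel_def set_lebesgue_integral_def f_def ..
  have "ennreal (cmod (duhamel F t \<xi>)) \<le> (\<integral>\<^sup>+\<tau>. ennreal (norm (f \<tau>)) \<partial>lborel)"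
  proof (cases "integrable lborel f")
    case True
    then show ?thesis unfolding D by (rule integral_norm_bound_ennreal)
  next
    case False
    then show ?thesis unfolding D by (simp add: not_integrable_integral_eq)
  qed
  also have "\<dots> \<le> (\<integral>\<^sup>+\<tau>. Kt a t \<tau> * ennreal (cmod (F \<tau> \<xi>)) \<partial>lborel)"
  proof (rule nn_integral_mono_AE)
    show "AE \<tau> in lborel. ennreal (norm (f \<tau>)) \<le> Kt a t \<tau> * ennreal (cmod (F \<tau> \<xi>))"
      using AE_lborel_singleton[of 0]
    proof eventually_elim
      case (elim \<tau>)
      show ?case
      proof (cases "0 < \<tau> \<and> \<tau> \<le> t")
        case True
        have "-(t-\<tau>) * (norm \<xi>)\<^sup>2 \<le> -(t-\<tau>) * a"
          using True a by (intro mult_left_mono_neg) auto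
        then have "exp (- (t - \<tau>) * (norm \<xi>)\<^sup>2) \<le> exp (-(t-\<tau>)*a)"
          by simp
        then have "norm (f \<tau>) \<le> exp (-(t-\<tau>)*a) * cmod (F \<tau> \<xi>)"
          using True by (auto simp: f_def norm_mult intro: mult_right_mono)
        then show ?thesis using True by (simp add: Kt_def ennreal_mult[symmetric] ennreal_leI del: ennreal_mult)
      next
        case False
        then have "f \<tau> = 0" using elim by (auto simp: f_def indicator_def)
        then show ?thesis by simp
      qed
    qed
  qed
  finally have bd: "ennreal (cmod (duhamel F t \<xi>)) \<le> (\<integral>\<^sup>+\<tau>. Kt a t \<tau> * ennreal (cmod (F \<tau> \<xi>)) \<partial>lborel)" .
  have "ennreal (cmod (complex_of_real (v \<xi>) * duhamel F t \<xi>)) = ennreal \<bar>v \<xi>\<bar> * ennreal (cmod (duhamel F t \<xi>))"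
    by (simp add: norm_mult ennreal_mult)
  also have "\<dots> \<le> ennreal \<bar>v \<xi>\<bar> * (\<integral>\<^sup>+\<tau>. Kt a t \<tau> * ennreal (cmod (F \<tau> \<xi>)) \<partial>lborel)"
    using bd by (rule mult_left_mono) simp
  also have "\<dots> = (\<integral>\<^sup>+\<tau>. ennreal \<bar>v \<xi>\<bar> * (Kt a t \<tau> * ennreal (cmod (F \<tau> \<xi>))) \<partial>lborel)"
    by (rule nn_integral_cmult[symmetric]) measurable
  also have "\<dots> = (\<integral>\<^sup>+\<tau>. Kt a t \<tau> * ennreal (cmod (complex_of_real (v \<xi>) * F \<tau> \<xi>)) \<partial>lborel)"
    by (intro nn_integral_cong) (simp add: norm_mult ennreal_mult mult_ac)
  finally show ?thesis .
qed



lemma sf_lborel: "sigma_finite_measure (lborel :: 'a::euclidean_space measure)"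
  by (rule lborel.sigma_finite_measure_axioms)

lemma chain:
  fixes F :: "real \<Rightarrow> R3 \<Rightarrow> complex" and v P :: "R3 \<Rightarrow> real"
  assumes F[measurable]: "(\<lambda>(\<tau>, \<xi>). F \<tau> \<xi>) \<in> borel_measurable (lborel \<Otimes>\<^sub>M lborel)"
    and v[measurable]: "v \<in> borel_measurable lborel"
    and P[measurable]: "P \<in> borel_measurable lborel" and P1: "\<forall>x. 1 \<le> P x"
    and supp: "\<And>\<xi>. v \<xi> \<noteq> 0 \<Longrightarrow> a \<le> (norm \<xi>)^2"
  shows "LXe lborel P (\<lambda>\<xi>. ennreal (cmod (complex_of_real (v \<xi>) * duhamel F t \<xi>)))
    \<le> (\<integral>\<^sup>+\<tau>. Kt a t \<tau> * LXe lborel P (\<lambda>\<xi>. ennreal (cmod (complex_of_real (v \<xi>) * F \<tau> \<xi>))) \<partial>lborel)"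
proof -
  define G where "G \<tau> \<xi> = ennreal (cmod (complex_of_real (v \<xi>) * F \<tau> \<xi>))" for \<tau> \<xi>
  have P0: "\<forall>x. 0 \<le> P x" using P1 by (meson order_trans zero_le_one)
  have Gm[measurable]: "(\<lambda>(\<tau>, \<xi>). Kt a t \<tau> * G \<tau> \<xi>) \<in> borel_measurable (lborel \<Otimes>\<^sub>M lborel)"
    unfolding G_def by measurable
  have "LXe lborel P (\<lambda>\<xi>. ennreal (cmod (complex_of_real (v \<xi>) * duhamel F t \<xi>)))
      \<le> LXe lborel P (\<lambda>\<xi>. \<integral>\<^sup>+\<tau>. Kt a t \<tau> * G \<tau> \<xi> \<partial>lborel)"
    unfolding G_def by (intro LXe_mono PB[OF F] P0 supp) auto
  also have "\<dots> \<le> (\<integral>\<^sup>+\<tau>. LXe lborel P (\<lambda>\<xi>. Kt a t \<tau> * G \<tau> \<xi>) \<partial>lborel)"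
    by (rule LX_minkowski[OF sf_lborel sf_lborel P P1 Gm])
  also have "\<dots> \<le> (\<integral>\<^sup>+\<tau>. Kt a t \<tau> * LXe lborel P (G \<tau>) \<partial>lborel)"
  proof (intro nn_integral_mono)
    fix \<tau>
    show "LXe lborel P (\<lambda>\<xi>. Kt a t \<tau> * G \<tau> \<xi>) \<le> Kt a t \<tau> * LXe lborel P (G \<tau>)"
      unfolding Kt_ennreal by (rule LXe_cmult[OF _ P0]) simp
  qed
  finally show ?thesis unfolding G_def .
qed

lemma g_meas:
  fixes F :: "real \<Rightarrow> R3 \<Rightarrow> complex" and v P :: "R3 \<Rightarrow> real"
  assumes F[measurable]: "(\<lambda>(\<tau>, \<xi>). F \<tau> \<xi>) \<in> borel_measurable (lborel \<Otimes>\<^sub>M lborel)"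
    and v[measurable]: "v \<in> borel_measurable lborel"
    and P[measurable]: "P \<in> borel_measurable lborel" and P0: "\<forall>x. 0 \<le> P x"
  shows "(\<lambda>\<tau>. LXe lborel P (\<lambda>\<xi>. ennreal (cmod (complex_of_real (v \<xi>) * F \<tau> \<xi>)))) \<in> borel_measurable lborel"
  by (rule LXe_measurable[OF sf_lborel P P0]) measurable

lemma duhamel_meas:
  fixes F :: "real \<Rightarrow> R3 \<Rightarrow> complex"
  assumes F[measurable]: "(\<lambda>(\<tau>, \<xi>). F \<tau> \<xi>) \<in> borel_measurable (lborel \<Otimes>\<^sub>M lborel)"
  shows "(\<lambda>\<xi>. duhamel F t \<xi>) \<in> borel_measurable lborel"
  unfolding duhamel_def set_lebesgue_integral_def by measurable

lemma time_norm_1: "time_norm 1 N = (\<integral>\<^sup>+t\<in>{0<..}. N t \<partial>lborel)"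
  by (simp add: time_norm_def)



lemma pow2_sq: "(2 powr (real_of_int j))^2 = 2 powr (2 * real_of_int j)"
proof -
  have "(2 powr (real_of_int j))^2 = 2 powr real_of_int j * 2 powr real_of_int j"
    by (simp add: power2_eq_square)
  also have "\<dots> = 2 powr (2 * real_of_int j)" by (simp add: powr_add[symmetric])
  finally show ?thesis .
qed

lemma part1_j:
  fixes F :: "real \<Rightarrow> R3 \<Rightarrow> complex"
  assumes chi: "admissible_chi chi" and pm[measurable]: "p \<in> borel_measurable lborel"
    and p1: "\<forall>x. 1 \<le> p x"
    and Fm[measurable]: "(\<lambda>(\<tau>, \<xi>). F \<tau> \<xi>) \<in> borel_measurable (lborel \<Otimes>\<^sub>M lborel)"
    and \<rho>: "1 \<le> \<rho>"
  shows "time_norm \<rho> (\<lambda>t. lux_norm p (\<lambda>\<xi>. complex_of_real (2 powr (real_of_int j * (1 - 3 / p \<xi> + two_over \<rho>)) * phij chi j \<xi>) * duhamel F t \<xi>))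
    \<le> ennreal (16/9) * time_norm 1 (\<lambda>t. lux_norm p (\<lambda>\<xi>. complex_of_real (2 powr (real_of_int j * (1 - 3 / p \<xi>)) * phij chi j \<xi>) * F t \<xi>))"
proof -
  note phij_meas[OF chi, measurable]
  have p0: "\<forall>x. 0 \<le> p x" using p1 by (meson order_trans zero_le_one)
  define r where "r = (if \<rho> = top then 0 else 1 / enn2real \<rho>)"
  have r01: "0 \<le> r" "r \<le> 1"
  proof -
    show "0 \<le> r" by (simp add: r_def)
    show "r \<le> 1"
    proof (cases "\<rho> = top")
      case False
      then obtain q where q: "\<rho> = ennreal q" "0 \<le> q" by (cases \<rho> rule: ennreal_cases) auto
      have "1 \<le> q" using \<rho> q by (metis ennreal_le_iff ennreal_1 zero_le_one)
      then show ?thesis using False q by (simp add: r_def)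
    qed (simp add: r_def)
  qed
  have tw: "two_over \<rho> = 2 * r" by (simp add: two_over_def r_def)
  define a where "a = 9/16 * (2 powr real_of_int j)^2"
  have a0: "0 < a" by (simp add: a_def)
  define b where "b = (16/9) powr r"
  have b0: "0 < b" by (simp add: b_def)
  have b1: "b \<le> 16/9"
  proof -
    have "(16/9::real) powr r \<le> (16/9) powr 1" using r01 by (intro powr_mono) auto
    then show ?thesis by (simp add: b_def)
  qed
  define c where "c = 2 powr (real_of_int j * two_over \<rho>)"
  have c0: "0 \<le> c" by (simp add: c_def)
  have cba: "c = b * a powr r"
  proof -
    have "b * a powr r = ((16/9) * a) powr r" unfolding b_def
      by (rule powr_mult[symmetric])
    also have "(16/9) * a = 2 powr (2 * real_of_int j)" by (simp add: a_def pow2_sq)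
    also have "(2 powr (2 * real_of_int j)) powr r = c" by (simp add: c_def tw powr_powr mult_ac)
    finally show ?thesis by simp
  qed
  define v where "v \<xi> = 2 powr (real_of_int j * (1 - 3 / p \<xi>)) * phij chi j \<xi>" for \<xi>
  have vm[measurable]: "v \<in> borel_measurable lborel" unfolding v_def by measurable
  define v' where "v' \<xi> = 2 powr (real_of_int j * (1 - 3 / p \<xi> + two_over \<rho>)) * phij chi j \<xi>" for \<xi>
  have v'c: "v' \<xi> = c * v \<xi>" for \<xi>
    by (simp add: v'_def v_def c_def distrib_left powr_add mult_ac)
  have v'm[measurable]: "v' \<in> borel_measurable lborel" unfolding v'_def by measurable
  have supp: "a \<le> (norm \<xi>)^2" if "v' \<xi> \<noteq> 0" for \<xi>
    using phij_supp[OF chi, of j \<xi>] that by (auto simp: v'_def a_def)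
  define g where "g \<tau> = LXe lborel p (\<lambda>\<xi>. ennreal (cmod (complex_of_real (v \<xi>) * F \<tau> \<xi>)))" for \<tau>
  have gm[measurable]: "g \<in> borel_measurable lborel"
    unfolding g_def by (rule g_meas[OF Fm vm pm p0])
  have Nb: "lux_norm p (\<lambda>\<xi>. complex_of_real (v' \<xi>) * duhamel F t \<xi>)
      \<le> ennreal b * ennreal (a powr r) * (\<integral>\<^sup>+\<tau>. Kt a t \<tau> * g \<tau> \<partial>lborel)" for t
  proof -
    have "lux_norm p (\<lambda>\<xi>. complex_of_real (v' \<xi>) * duhamel F t \<xi>)
        \<le> (\<integral>\<^sup>+\<tau>. Kt a t \<tau> * LXe lborel p (\<lambda>\<xi>. ennreal (cmod (complex_of_real (v' \<xi>) * F \<tau> \<xi>))) \<partial>lborel)"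
      unfolding lux_eq by (rule chain[OF Fm v'm pm p1 supp])
    also have "\<dots> \<le> (\<integral>\<^sup>+\<tau>. Kt a t \<tau> * (ennreal c * g \<tau>) \<partial>lborel)"
    proof (intro nn_integral_mono mult_left_mono)
      fix \<tau>
      have "LXe lborel p (\<lambda>\<xi>. ennreal (cmod (complex_of_real (v' \<xi>) * F \<tau> \<xi>)))
          = LXe lborel p (\<lambda>\<xi>. ennreal c * ennreal (cmod (complex_of_real (v \<xi>) * F \<tau> \<xi>)))"
        using c0 by (simp add: v'c norm_mult abs_mult ennreal_mult mult.assoc)
      also have "\<dots> \<le> ennreal c * g \<tau>" unfolding g_def by (rule LXe_cmult[OF c0 p0])
      finally show "LXe lborel p (\<lambda>\<xi>. ennreal (cmod (complex_of_real (v' \<xi>) * F \<tau> \<xi>))) \<le> ennreal c * g \<tau>" .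
    qed simp
    also have "\<dots> = (\<integral>\<^sup>+\<tau>. ennreal c * (Kt a t \<tau> * g \<tau>) \<partial>lborel)"
      by (simp add: mult_ac)
    also have "\<dots> = ennreal c * (\<integral>\<^sup>+\<tau>. Kt a t \<tau> * g \<tau> \<partial>lborel)"
      by (rule nn_integral_cmult) measurable
    also have "ennreal c = ennreal b * ennreal (a powr r)"
      using b0 by (simp add: cba ennreal_mult)
    finally show ?thesis .
  qed
  have "time_norm \<rho> (\<lambda>t. lux_norm p (\<lambda>\<xi>. complex_of_real (v' \<xi>) * duhamel F t \<xi>))
      \<le> ennreal b * (\<integral>\<^sup>+\<tau>\<in>{0<..}. g \<tau> \<partial>lborel)"
    by (rule time_bound[OF gm a0 b0 \<rho>]) (use Nb in \<open>simp add: r_def\<close>)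
  also have "\<dots> \<le> ennreal (16/9) * (\<integral>\<^sup>+\<tau>\<in>{0<..}. g \<tau> \<partial>lborel)"
    using b1 by (intro mult_right_mono ennreal_leI) auto
  also have "(\<integral>\<^sup>+\<tau>\<in>{0<..}. g \<tau> \<partial>lborel)
      = time_norm 1 (\<lambda>t. lux_norm p (\<lambda>\<xi>. complex_of_real (v \<xi>) * F t \<xi>))"
    unfolding time_norm_1 g_def lux_eq ..
  finally show ?thesis unfolding v_def v'_def .
qed



lemma part23_j:
  fixes F :: "real \<Rightarrow> R3 \<Rightarrow> complex" and \<rho>' :: ennreal
  assumes chi: "admissible_chi chi"
    and Fm[measurable]: "(\<lambda>(\<tau>, \<xi>). F \<tau> \<xi>) \<in> borel_measurable (lborel \<Otimes>\<^sub>M lborel)"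
    and \<rho>: "1 \<le> \<rho>'" and b0: "0 < b"
    and ba: "b * (9/16 * (2 powr real_of_int j)^2) powr (if \<rho>' = top then 0 else 1 / enn2real \<rho>') = 1"
  shows "time_norm \<rho>' (\<lambda>t. Lq_norm 2 (\<lambda>\<xi>. complex_of_real (phij chi j \<xi>) * duhamel F t \<xi>))
    \<le> ennreal b * time_norm 1 (\<lambda>t. Lq_norm 2 (\<lambda>\<xi>. complex_of_real (phij chi j \<xi>) * F t \<xi>))"
proof -
  note phij_meas[OF chi, measurable]
  define a where "a = 9/16 * (2 powr real_of_int j)^2"
  have a0: "0 < a" by (simp add: a_def)
  define v where "v = phij chi j"
  have vm[measurable]: "v \<in> borel_measurable lborel" unfolding v_def by measurable
  have supp: "a \<le> (norm \<xi>)^2" if "v \<xi> \<noteq> 0" for \<xi>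
    using phij_supp[OF chi, of j \<xi>] that by (auto simp: v_def a_def)
  have P1: "\<forall>x::R3. 1 \<le> (2::real)" by simp
  have P0: "\<forall>x::R3. 0 \<le> (2::real)" by simp
  define g where "g \<tau> = LXe lborel (\<lambda>_. 2) (\<lambda>\<xi>. ennreal (cmod (complex_of_real (v \<xi>) * F \<tau> \<xi>)))" for \<tau>
  have gm[measurable]: "g \<in> borel_measurable lborel"
    unfolding g_def by (rule g_meas[OF Fm vm _ P0]) simp
  have Dm[measurable]: "(\<lambda>\<xi>. duhamel F t \<xi>) \<in> borel_measurable lborel" for t
    by (rule duhamel_meas[OF Fm])
  have Nb: "Lq_norm 2 (\<lambda>\<xi>. complex_of_real (v \<xi>) * duhamel F t \<xi>)
      \<le> ennreal b * ennreal (a powr (if \<rho>' = top then 0 else 1 / enn2real \<rho>')) * (\<integral>\<^sup>+\<tau>. Kt a t \<tau> * g \<tau> \<partial>lborel)" for t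
  proof -
    have "Lq_norm 2 (\<lambda>\<xi>. complex_of_real (v \<xi>) * duhamel F t \<xi>)
        = LXe lborel (\<lambda>_. 2) (\<lambda>\<xi>. ennreal (cmod (complex_of_real (v \<xi>) * duhamel F t \<xi>)))"
      by (rule Lq_eq) (simp_all, measurable)
    also have "\<dots> \<le> (\<integral>\<^sup>+\<tau>. Kt a t \<tau> * g \<tau> \<partial>lborel)"
      unfolding g_def by (rule chain[OF Fm vm _ P1 supp]) simp
    finally have le: "Lq_norm 2 (\<lambda>\<xi>. complex_of_real (v \<xi>) * duhamel F t \<xi>) \<le> (\<integral>\<^sup>+\<tau>. Kt a t \<tau> * g \<tau> \<partial>lborel)" .
    have one: "ennreal b * ennreal (a powr (if \<rho>' = top then 0 else 1 / enn2real \<rho>')) = 1"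
      using ba b0 unfolding a_def by (simp add: ennreal_mult[symmetric] del: ennreal_mult)
    show ?thesis unfolding one using le by simp
  qed
  have "time_norm \<rho>' (\<lambda>t. Lq_norm 2 (\<lambda>\<xi>. complex_of_real (v \<xi>) * duhamel F t \<xi>))
      \<le> ennreal b * (\<integral>\<^sup>+\<tau>\<in>{0<..}. g \<tau> \<partial>lborel)"
    by (rule time_bound[OF gm a0 b0 \<rho>]) (rule Nb)
  also have "(\<integral>\<^sup>+\<tau>\<in>{0<..}. g \<tau> \<partial>lborel)
      = time_norm 1 (\<lambda>t. Lq_norm 2 (\<lambda>\<xi>. complex_of_real (v \<xi>) * F t \<xi>))"
  proof -
    have "g \<tau> = Lq_norm 2 (\<lambda>\<xi>. complex_of_real (v \<xi>) * F \<tau> \<xi>)" for \<tau>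
      unfolding g_def by (rule Lq_eq[symmetric]) (simp_all, measurable)
    then show ?thesis unfolding time_norm_1 by simp
  qed
  finally show ?thesis unfolding v_def .
qed



lemma coeff_id: "2 powr (real_of_int j * (3/2)) * (1 / (9/16 * (2 powr real_of_int j)^2))
    = 16/9 * 2 powr (real_of_int j * (- 1 / 2))"
proof -
  have "2 powr (real_of_int j * (3/2)) = 2 powr (real_of_int j * (- 1 / 2)) * 2 powr (2 * real_of_int j)"
    by (simp add: powr_add[symmetric] algebra_simps)
  then show ?thesis by (simp add: pow2_sq field_simps)
qed

theorem lemma5p2:
  fixes p chi :: "R3 \<Rightarrow> real" and \<rho> :: ennreal
  assumes "admissible_chi chi"
    and "P0_log p"
    and "AE x in lborel. 2 \<le> p x" and "AE x in lborel. p x \<le> 6"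
    and "1 \<le> \<rho>"
  shows "\<exists>C::real. C > 0 \<and> (\<forall>F :: real \<Rightarrow> R3 \<Rightarrow> complex.
      (\<lambda>(\<tau>, \<xi>). F \<tau> \<xi>) \<in> borel_measurable (lborel \<Otimes>\<^sub>M lborel)
      \<longrightarrow> CL_var chi 1 p (\<lambda>\<xi>. 1 - 3 / p \<xi>) F < top
      \<longrightarrow> CL_const chi 1 2 (-1/2) F < top
      \<longrightarrow> Y_norm chi p \<rho> (duhamel F)
          \<le> ennreal C * (CL_var chi 1 p (\<lambda>\<xi>. 1 - 3 / p \<xi>) F + CL_const chi 1 2 (-1/2) F))"
proof -
  have chi: "admissible_chi chi" by fact
  have pm: "p \<in> borel_measurable lborel" and p1: "\<forall>x. 1 \<le> p x"
    using assms(2) unfolding P0_log_def by auto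
  have \<rho>: "1 \<le> \<rho>" by fact
  show ?thesis
  proof (rule exI[of _ 2], intro conjI allI impI)
    show "(0::real) < 2" by simp
    fix F :: "real \<Rightarrow> R3 \<Rightarrow> complex"
    assume Fm: "(\<lambda>(\<tau>, \<xi>). F \<tau> \<xi>) \<in> borel_measurable (lborel \<Otimes>\<^sub>M lborel)"
    define A where "A = CL_var chi 1 p (\<lambda>\<xi>. 1 - 3 / p \<xi>) F"
    define B where "B = CL_const chi 1 2 (-1/2) F"
    define T where "T j = time_norm 1 (\<lambda>t. Lq_norm 2 (\<lambda>\<xi>. complex_of_real (phij chi j \<xi>) * F t \<xi>))" for j
    have B_eq: "B = (\<integral>\<^sup>+j. ennreal (2 powr (real_of_int j * (- 1 / 2))) * T j \<partial>count_space UNIV)"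
      unfolding B_def CL_const_def T_def ..
    have P1: "CL_var chi \<rho> p (\<lambda>\<xi>. 1 - 3 / p \<xi> + two_over \<rho>) (duhamel F) \<le> ennreal (16/9) * A"
    proof -
      have "CL_var chi \<rho> p (\<lambda>\<xi>. 1 - 3 / p \<xi> + two_over \<rho>) (duhamel F)
          \<le> (\<integral>\<^sup>+j. ennreal (16/9) * time_norm 1 (\<lambda>t. lux_norm p (\<lambda>\<xi>. complex_of_real (2 powr (real_of_int j * (1 - 3 / p \<xi>)) * phij chi j \<xi>) * F t \<xi>)) \<partial>count_space UNIV)"
        unfolding CL_var_def by (intro nn_integral_mono part1_j[OF chi pm p1 Fm \<rho>])
      also have "\<dots> = ennreal (16/9) * A"
        unfolding A_def CL_var_def by (rule nn_integral_cmult) simp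
      finally show ?thesis .
    qed
    have P2: "CL_const chi 1 2 (3/2) (duhamel F) \<le> ennreal (16/9) * B"
    proof -
      have "CL_const chi 1 2 (3/2) (duhamel F)
          \<le> (\<integral>\<^sup>+j. ennreal (2 powr (real_of_int j * (3/2))) * (ennreal (1 / (9/16 * (2 powr real_of_int j)^2)) * T j) \<partial>count_space UNIV)"
        unfolding CL_const_def T_def
      proof (intro nn_integral_mono mult_left_mono)
        fix j :: int
        show "time_norm 1 (\<lambda>t. Lq_norm 2 (\<lambda>\<xi>. complex_of_real (phij chi j \<xi>) * duhamel F t \<xi>))
          \<le> ennreal (1 / (9/16 * (2 powr real_of_int j)^2)) * time_norm 1 (\<lambda>t. Lq_norm 2 (\<lambda>\<xi>. complex_of_real (phij chi j \<xi>) * F t \<xi>))"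
          by (rule part23_j[OF chi Fm]) simp_all
      qed simp
      also have "\<dots> = (\<integral>\<^sup>+j. ennreal (16/9) * (ennreal (2 powr (real_of_int j * (- 1 / 2))) * T j) \<partial>count_space UNIV)"
      proof (intro nn_integral_cong)
        fix j :: int
        have "ennreal (2 powr (real_of_int j * (3/2))) * ennreal (1 / (9/16 * (2 powr real_of_int j)^2))
            = ennreal (16/9) * ennreal (2 powr (real_of_int j * (- 1 / 2)))"
          using coeff_id[of j] by (simp add: ennreal_mult[symmetric] del: ennreal_mult)
        then show "ennreal (2 powr (real_of_int j * (3/2))) * (ennreal (1 / (9/16 * (2 powr real_of_int j)^2)) * T j)
            = ennreal (16/9) * (ennreal (2 powr (real_of_int j * (- 1 / 2))) * T j)"
          by (metis mult.assoc)
      qed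
      also have "\<dots> = ennreal (16/9) * B"
        unfolding B_eq by (rule nn_integral_cmult) simp
      finally show ?thesis .
    qed
    have P3: "CL_const chi top 2 (-1/2) (duhamel F) \<le> B"
      unfolding B_eq CL_const_def T_def
    proof (intro nn_integral_mono mult_left_mono)
      fix j :: int
      show "time_norm top (\<lambda>t. Lq_norm 2 (\<lambda>\<xi>. complex_of_real (phij chi j \<xi>) * duhamel F t \<xi>))
          \<le> time_norm 1 (\<lambda>t. Lq_norm 2 (\<lambda>\<xi>. complex_of_real (phij chi j \<xi>) * F t \<xi>))"
        using part23_j[OF chi Fm, of top 1 j] by simp
    qed simp
    have A2: "ennreal (16/9) * A \<le> ennreal 2 * (A + B)"
    proof -
      have "ennreal (16/9) * A \<le> ennreal 2 * A" by (intro mult_right_mono ennreal_leI) auto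
      also have "\<dots> \<le> ennreal 2 * (A + B)" by (intro mult_left_mono) auto
      finally show ?thesis .
    qed
    have B2: "ennreal (16/9) * B \<le> ennreal 2 * (A + B)"
    proof -
      have "ennreal (16/9) * B \<le> ennreal 2 * B" by (intro mult_right_mono ennreal_leI) auto
      also have "\<dots> \<le> ennreal 2 * (A + B)" by (intro mult_left_mono) auto
      finally show ?thesis .
    qed
    have B1: "B \<le> ennreal 2 * (A + B)"
    proof -
      have "B = ennreal 1 * B" by simp
      also have "\<dots> \<le> ennreal (16/9) * B" by (intro mult_right_mono ennreal_leI) auto
      finally show ?thesis using B2 by simp
    qed
    show "Y_norm chi p \<rho> (duhamel F) \<le> ennreal 2 * (CL_var chi 1 p (\<lambda>\<xi>. 1 - 3 / p \<xi>) F + CL_const chi 1 2 (-1/2) F)"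
      unfolding Y_norm_def A_def[symmetric] B_def[symmetric]
    proof (intro max.boundedI)
      show "CL_var chi \<rho> p (\<lambda>\<xi>. 1 - 3 / p \<xi> + two_over \<rho>) (duhamel F) \<le> ennreal 2 * (A + B)"
        using P1 A2 by (rule order_trans)
      show "CL_const chi 1 2 (3/2) (duhamel F) \<le> ennreal 2 * (A + B)"
        using P2 B2 by (rule order_trans)
      show "CL_const chi top 2 (-1/2) (duhamel F) \<le> ennreal 2 * (A + B)"
        using P3 B1 by (rule order_trans)
    qed
  qed
qed



end
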